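(* Let $\{a_n\}_{n\ge1}$ be a sequence of positive real numbers. Suppose that at least one of the following holds: either $\frac{a_{2n}}{a_n}>1$ for all sufficiently large $n$, or $\frac{a_{2n+1}}{a_n}>1+\frac{1}{2n}$ for all sufficiently large $n$. Then $\sum_{n=1}^\infty a_n$ diverges. *)

theory Defs
  imports Complex_Main
begin

end

theory Submission
  imports Defs
begin

lemma block_mono:
  fixes a :: "nat \<Rightarrow> real"
  assumes nn: "\<And>n. n \<ge> N \<Longrightarrow> a n \<ge> 0"
    and c: "c \<le> 1"
    and step: "\<And>n. n \<ge> N \<Longrightarrow> a n \<le> a (2*n + c)"
    and L: "L \<ge> N"
  shows "sum a {L..<2*L} \<le> sum a {2*L..<4*L}"
proof -
  let ?f = "\<lambda>n. 2*n + c"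
  have inj: "inj_on ?f {L..<2*L}" by (auto simp: inj_on_def)
  have sub: "?f ` {L..<2*L} \<subseteq> {2*L..<4*L}" using c by auto
  have "sum a {L..<2*L} \<le> sum (\<lambda>n. a (?f n)) {L..<2*L}"
    by (rule sum_mono) (use step L in auto)
  also have "\<dots> = sum a (?f ` {L..<2*L})"
    using sum.reindex[OF inj, of a] by simp
  also have "\<dots> \<le> sum a {2*L..<4*L}"
    by (rule sum_mono2) (use sub nn L in auto)
  finally show ?thesis .
qed

lemma main:
  fixes a :: "nat \<Rightarrow> real"
  assumes pos: "\<And>n. n \<ge> 1 \<Longrightarrow> a n > 0"
    and c: "c \<le> 1" and N: "N \<ge> 1"
    and step: "\<And>n. n \<ge> N \<Longrightarrow> a n \<le> a (2*n + c)"
  shows "\<not> summable (\<lambda>n. a (n + 1))"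
proof
  assume "summable (\<lambda>n. a (n + 1))"
  hence sa: "summable a" using summable_Suc_iff[of a] by simp
  define S where "S k = sum a {2^k*N..<2*(2^k*N)}" for k :: nat
  have nn: "a n \<ge> 0" if "n \<ge> N" for n
  proof -
    have "1 \<le> n" using N that by linarith
    from pos[OF this] show ?thesis by simp
  qed
  have mono: "S k \<le> S (Suc k)" for k
  proof -
    have "2^k*N \<ge> N" by simp
    from block_mono[of N a c, OF nn c step this]
    have "sum a {2^k*N..<2*(2^k*N)} \<le> sum a {2*(2^k*N)..<4*(2^k*N)}" .
    moreover have "2*(2^k*N) = 2^Suc k * N" "4*(2^k*N) = 2*(2^Suc k*N)" by simp_all
    ultimately show ?thesis unfolding S_def by metis
  qed
  have ge: "S 0 \<le> S k" for k
  proof (induction k)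
    case (Suc k) thus ?case using mono[of k] by linarith
  qed simp
  have S0: "S 0 > 0"
  proof -
    have "S 0 = sum a {N..<2*N}" by (simp add: S_def)
    also have "\<dots> \<ge> a N"
      by (rule member_le_sum) (use N nn in auto)
    finally show ?thesis using pos[OF N] by simp
  qed
  define s where "s n = sum a {..<n}" for n
  have sl: "s \<longlonglongrightarrow> suminf a" unfolding s_def using summable_LIMSEQ[OF sa] .
  have h1: "filterlim (\<lambda>k::nat. 2^k*N) sequentially sequentially"
  proof (rule filterlim_subseq)
    show "strict_mono (\<lambda>k::nat. 2^k*N)" using N unfolding strict_mono_Suc_iff by simp
  qed
  have h2: "filterlim (\<lambda>k::nat. 2*(2^k*N)) sequentially sequentially"
  proof (rule filterlim_subseq)
    show "strict_mono (\<lambda>k::nat. 2*(2^k*N))" using N unfolding strict_mono_Suc_iff by simp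
  qed
  have t1: "(\<lambda>k. s (2^k*N)) \<longlonglongrightarrow> suminf a" using filterlim_compose[OF sl h1] by simp
  have t2: "(\<lambda>k. s (2*(2^k*N))) \<longlonglongrightarrow> suminf a" using filterlim_compose[OF sl h2] by simp
  have "S k = s (2*(2^k*N)) - s (2^k*N)" for k
  proof -
    have "s (2*(2^k*N)) = s (2^k*N) + S k"
      unfolding S_def s_def lessThan_atLeast0
      by (rule sum.atLeastLessThan_concat[symmetric]) simp_all
    thus ?thesis by simp
  qed
  hence Seq: "S = (\<lambda>k. s (2*(2^k*N)) - s (2^k*N))" by (rule ext)
  have "S \<longlonglongrightarrow> 0" unfolding Seq using tendsto_diff[OF t2 t1] by simp
  hence "S 0 \<le> 0" by (rule LIMSEQ_le_const) (use ge in auto)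
  thus False using S0 by simp
qed

theorem corollary2p1p4:
  fixes a :: "nat \<Rightarrow> real"
  assumes pos: "\<And>n. n \<ge> 1 \<Longrightarrow> a n > 0"
    and cond: "(\<forall>\<^sub>F n in sequentially. a (2 * n) / a n > 1)
             \<or> (\<forall>\<^sub>F n in sequentially. a (2 * n + 1) / a n > 1 + 1 / (2 * real n))"
  shows "\<not> summable (\<lambda>n. a (n + 1))"
  using cond
proof
  assume "\<forall>\<^sub>F n in sequentially. a (2 * n) / a n > 1"
  then obtain M where M: "\<And>n. n \<ge> M \<Longrightarrow> a (2 * n) / a n > 1"
    by (auto simp: eventually_sequentially)
  have st: "a n \<le> a (2*n + 0)" if "n \<ge> max M 1" for n
  proof -
    have "a n > 0" using pos that by simp
    moreover have "a (2*n)/a n > 1" using M that by simp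
    ultimately show ?thesis by (simp add: field_simps)
  qed
  show ?thesis by (rule main[of a _ "max M 1", OF pos _ _ st]) simp_all
next
  assume "\<forall>\<^sub>F n in sequentially. a (2 * n + 1) / a n > 1 + 1 / (2 * real n)"
  then obtain M where M: "\<And>n. n \<ge> M \<Longrightarrow> a (2 * n + 1) / a n > 1 + 1 / (2 * real n)"
    by (auto simp: eventually_sequentially)
  have st: "a n \<le> a (2*n + 1)" if "n \<ge> max M 1" for n
  proof -
    have "a n > 0" using pos that by simp
    moreover have "a (2*n+1)/a n > 1 + 1 / (2 * real n)" using M that by simp
    moreover have "1 / (2 * real n) \<ge> 0" by simp
    ultimately have "a (2*n+1)/a n > 1" by linarith
    with \<open>a n > 0\<close> show ?thesis by (simp add: field_simps)
  qed
  show ?thesis by (rule main[of a _ "max M 1", OF pos _ _ st]) simp_all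
qed

end
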